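(* Let $\delta:\,]0,+\infty[\to\mathbb R$ be nonnegative, bounded and continuously differentiable, and consider $\ddot r+\delta(r)\dot r=-1/r^2$, $r>0$. If $r_1\not\equiv r_2$ are two solutions and $r_1(t_* )=r_2(t_* )$ for some $t_*$, then $r_1(t)\neq r_2(t)$ for every $t\neq t_*$ in the common interval of definition of $r_1$ and $r_2$. *)

theory Defs
  imports "HOL-Analysis.Analysis"
begin

definition is_solution :: "(real \<Rightarrow> real) \<Rightarrow> real set \<Rightarrow> (real \<Rightarrow> real) \<Rightarrow> bool" where
  "is_solution \<delta> I r \<longleftrightarrow> is_interval I \<and> open I \<and> I \<noteq> {} \<and>
     (\<forall>t\<in>I. r t > 0) \<and>
     (\<exists>r'. \<forall>t\<in>I. (r has_real_derivative r' t) (at t) \<and>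
               (r' has_real_derivative (- 1 / (r t)^2 - \<delta> (r t) * r' t)) (at t))"

end

theory Submission
  imports Defs
begin


lemma antideriv:
  fixes \<delta> :: "real \<Rightarrow> real"
  assumes cont: "continuous_on {0<..} \<delta>" and c: "c > 0"
  shows "\<exists>\<Delta>. \<forall>x>c. (\<Delta> has_real_derivative \<delta> x) (at x)"
proof (intro exI allI impI)
  fix x :: real assume x: "x > c"
  have "continuous_on {c..x+1} \<delta>"
    by (rule continuous_on_subset[OF cont]) (use c in auto)
  then have "((\<lambda>y. integral {c..y} \<delta>) has_real_derivative \<delta> x) (at x within {c..x+1})"
    using x by (intro integral_has_real_derivative) auto
  then show "((\<lambda>y. integral {c..y} \<delta>) has_real_derivative \<delta> x) (at x)"
    using x by (simp add: at_within_Icc_at)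
qed

lemma MVT_abs:
  fixes f f' :: "real \<Rightarrow> real"
  assumes d: "\<And>z. min a b \<le> z \<Longrightarrow> z \<le> max a b \<Longrightarrow> (f has_real_derivative f' z) (at z)"
    and bd: "\<And>z. min a b \<le> z \<Longrightarrow> z \<le> max a b \<Longrightarrow> \<bar>f' z\<bar> \<le> M"
  shows "\<bar>f b - f a\<bar> \<le> M * \<bar>b - a\<bar>"
proof (cases a b rule: linorder_cases)
  case less
  then obtain z where z: "a < z" "z < b" "f b - f a = (b - a) * f' z"
    using MVT2[of a b f f'] d by (auto simp: min_def max_def)
  have "\<bar>f' z\<bar> \<le> M" using bd[of z] z less by auto
  then show ?thesis using z less by (simp add: abs_mult mult.commute mult_right_mono)
next
  case equal then show ?thesis by simp
next
  case greater
  then obtain z where z: "b < z" "z < a" "f a - f b = (a - b) * f' z"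
    using MVT2[of b a f f'] d by (auto simp: min_def max_def)
  have "\<bar>f' z\<bar> \<le> M" using bd[of z] z greater by auto
  then show ?thesis using z greater by (simp add: abs_mult mult.commute mult_right_mono abs_minus_commute)
qed

lemma lip_inv:
  fixes x y c :: real
  assumes "c > 0" "x > c" "y > c"
  shows "\<bar>1 / y^2 - 1 / x^2\<bar> \<le> 2 / c^3 * \<bar>x - y\<bar>"
proof -
  have xy: "x > 0" "y > 0" using assms by auto
  have eq: "1 / y^2 - 1 / x^2 = (x - y) * (1 / (x * y^2) + 1 / (x^2 * y))"
    using xy by (simp add: field_simps power2_eq_square)
  have a: "1 / (x * y^2) \<le> 1 / c^3"
  proof -
    have "c^2 \<le> y^2" using assms by (intro power_mono) auto
    then have "c * c^2 \<le> x * y^2" using assms by (intro mult_mono) auto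
    then have "c^3 \<le> x * y^2" by (simp add: power3_eq_cube power2_eq_square)
    then show ?thesis using assms by (intro divide_left_mono) auto
  qed
  have b: "1 / (x^2 * y) \<le> 1 / c^3"
  proof -
    have "c^2 \<le> x^2" using assms by (intro power_mono) auto
    then have "c^2 * c \<le> x^2 * y" using assms by (intro mult_mono) auto
    then have "c^3 \<le> x^2 * y" by (simp add: power3_eq_cube power2_eq_square)
    then show ?thesis using assms by (intro divide_left_mono) auto
  qed
  have pos: "0 \<le> 1 / (x * y^2) + 1 / (x^2 * y)" using xy by simp
  have "\<bar>1 / y^2 - 1 / x^2\<bar> = \<bar>x - y\<bar> * (1 / (x * y^2) + 1 / (x^2 * y))"
    using eq pos by (simp add: abs_mult)
  also have "\<dots> \<le> \<bar>x - y\<bar> * (2 / c^3)" using a b by (intro mult_left_mono) auto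
  finally show ?thesis by (simp add: mult.commute)
qed



locale two_sol =
  fixes \<delta> :: "real \<Rightarrow> real" and B c :: real and \<Delta> :: "real \<Rightarrow> real"
    and \<alpha> \<beta> :: real and r1 r2 r1' r2' :: "real \<Rightarrow> real"
  assumes B: "\<And>x. x > 0 \<Longrightarrow> \<bar>\<delta> x\<bar> \<le> B"
    and c: "c > 0"
    and \<Delta>: "\<And>x. x > c \<Longrightarrow> (\<Delta> has_real_derivative \<delta> x) (at x)"
    and pos1: "\<And>x. x \<in> {\<alpha>..\<beta>} \<Longrightarrow> r1 x > c"
    and pos2: "\<And>x. x \<in> {\<alpha>..\<beta>} \<Longrightarrow> r2 x > c"
    and d1: "\<And>x. x \<in> {\<alpha>..\<beta>} \<Longrightarrow> (r1 has_real_derivative r1' x) (at x)"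
    and dd1: "\<And>x. x \<in> {\<alpha>..\<beta>} \<Longrightarrow> (r1' has_real_derivative (- 1 / (r1 x)^2 - \<delta> (r1 x) * r1' x)) (at x)"
    and d2: "\<And>x. x \<in> {\<alpha>..\<beta>} \<Longrightarrow> (r2 has_real_derivative r2' x) (at x)"
    and dd2: "\<And>x. x \<in> {\<alpha>..\<beta>} \<Longrightarrow> (r2' has_real_derivative (- 1 / (r2 x)^2 - \<delta> (r2 x) * r2' x)) (at x)"
begin

lemma B_nonneg: "B \<ge> 0"
  using B[of 1] by auto

lemma lip_Delta: "x > c \<Longrightarrow> y > c \<Longrightarrow> \<bar>\<Delta> x - \<Delta> y\<bar> \<le> B * \<bar>x - y\<bar>"
  using MVT_abs[of y x \<Delta> \<delta> B] \<Delta> B c by (auto simp: abs_minus_commute)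

lemma du: "x \<in> {\<alpha>..\<beta>} \<Longrightarrow> ((\<lambda>x. r1 x - r2 x) has_real_derivative (r1' x - r2' x)) (at x)"
  by (intro DERIV_diff d1 d2)

lemma dphi: "x \<in> {\<alpha>..\<beta>} \<Longrightarrow> ((\<lambda>x. r1' x - r2' x + \<Delta> (r1 x) - \<Delta> (r2 x)) has_real_derivative
   (1 / (r2 x)^2 - 1 / (r1 x)^2)) (at x)"
proof -
  assume x: "x \<in> {\<alpha>..\<beta>}"
  have a: "((\<lambda>x. \<Delta> (r1 x)) has_real_derivative \<delta> (r1 x) * r1' x) (at x)"
    by (rule DERIV_chain2[OF \<Delta> d1]) (use x pos1 in auto)
  have b: "((\<lambda>x. \<Delta> (r2 x)) has_real_derivative \<delta> (r2 x) * r2' x) (at x)"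
    by (rule DERIV_chain2[OF \<Delta> d2]) (use x pos2 in auto)
  have "((\<lambda>x. r1' x - r2' x + \<Delta> (r1 x) - \<Delta> (r2 x)) has_real_derivative
   ((- 1 / (r1 x)^2 - \<delta> (r1 x) * r1' x) - (- 1 / (r2 x)^2 - \<delta> (r2 x) * r2' x)
     + \<delta> (r1 x) * r1' x - \<delta> (r2 x) * r2' x)) (at x)"
    by (intro DERIV_diff DERIV_add a b dd1 dd2 x)
  then show ?thesis by (simp add: algebra_simps)
qed

lemma cont_u: "continuous_on {\<alpha>..\<beta>} (\<lambda>x. r1 x - r2 x)"
  by (intro continuous_at_imp_continuous_on ballI) (rule DERIV_isCont[OF du])

lemma cont_phi: "continuous_on {\<alpha>..\<beta>} (\<lambda>x. r1' x - r2' x + \<Delta> (r1 x) - \<Delta> (r2 x))"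
  by (intro continuous_at_imp_continuous_on ballI) (rule DERIV_isCont[OF dphi])

lemma A_pos:
  assumes ab: "\<alpha> \<le> a" "a < b" "b \<le> \<beta>" and za: "r1 a = r2 a" and zb: "r1 b = r2 b"
    and gt: "\<And>z. a < z \<Longrightarrow> z < b \<Longrightarrow> r1 z > r2 z"
  shows False
proof -
  have aI: "a \<in> {\<alpha>..\<beta>}" and bI: "b \<in> {\<alpha>..\<beta>}" using ab by auto
  have ua: "r1' a - r2' a \<ge> 0"
  proof (rule ccontr)
    assume "\<not> ?thesis"
    then have "r1' a - r2' a < 0" by simp
    then obtain d where d: "d > 0" "\<And>h. h > 0 \<Longrightarrow> h < d \<Longrightarrow> r1 a - r2 a > r1 (a + h) - r2 (a + h)"
      using DERIV_neg_dec_right[OF du[OF aI]] by blast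
    define h where "h = min (d/2) ((b-a)/2)"
    have "h > 0" "h < d" "a < a + h" "a + h < b" using d(1) ab by (auto simp: h_def min_def field_simps)
    then show False using d(2)[of h] gt[of "a+h"] za by auto
  qed
  have ub: "r1' b - r2' b \<le> 0"
  proof (rule ccontr)
    assume "\<not> ?thesis"
    then have "r1' b - r2' b > 0" by simp
    then obtain d where d: "d > 0" "\<And>h. h > 0 \<Longrightarrow> h < d \<Longrightarrow> r1 (b - h) - r2 (b - h) < r1 b - r2 b"
      using DERIV_pos_inc_left[OF du[OF bI]] by blast
    define h where "h = min (d/2) ((b-a)/2)"
    have "h > 0" "h < d" "a < b - h" "b - h < b" using d(1) ab by (auto simp: h_def min_def field_simps)
    then show False using d(2)[of h] gt[of "b-h"] zb by auto
  qed
  have dd: "\<And>x. a \<le> x \<Longrightarrow> x \<le> b \<Longrightarrow> ((\<lambda>x. r1' x - r2' x + \<Delta> (r1 x) - \<Delta> (r2 x)) has_real_derivative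
     (1 / (r2 x)^2 - 1 / (r1 x)^2)) (at x)" using ab by (intro dphi) auto
  obtain z where z: "a < z" "z < b" and eq:
    "(r1' b - r2' b + \<Delta> (r1 b) - \<Delta> (r2 b)) - (r1' a - r2' a + \<Delta> (r1 a) - \<Delta> (r2 a))
      = (b - a) * (1 / (r2 z)^2 - 1 / (r1 z)^2)"
    using MVT2[OF ab(2) dd] by blast
  have "r2 z > 0" using pos2[of z] c z ab by auto
  then have "(r2 z)^2 < (r1 z)^2" using gt[OF z] by (intro power_strict_mono) auto
  then have "1 / (r2 z)^2 - 1 / (r1 z)^2 > 0" using \<open>r2 z > 0\<close>
    by (simp add: frac_less2)
  then have "(b - a) * (1 / (r2 z)^2 - 1 / (r1 z)^2) > 0" using ab by simp
  then show False using eq ua ub za zb by simp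
qed

end

lemma two_sol_swap: "two_sol \<delta> B c \<Delta> \<alpha> \<beta> r1 r2 r1' r2' \<Longrightarrow> two_sol \<delta> B c \<Delta> \<alpha> \<beta> r2 r1 r2' r1'"
  unfolding two_sol_def by blast

context two_sol begin

lemma A_sign:
  assumes ab: "\<alpha> \<le> a" "a < b" "b \<le> \<beta>" and za: "r1 a = r2 a" and zb: "r1 b = r2 b"
    and ne: "\<And>z. a < z \<Longrightarrow> z < b \<Longrightarrow> r1 z \<noteq> r2 z"
  shows False
proof -
  interpret sw: two_sol \<delta> B c \<Delta> \<alpha> \<beta> r2 r1 r2' r1'
    by (rule two_sol_swap) (rule two_sol_axioms)
  define m where "m = (a + b) / 2"
  have m: "a < m" "m < b" using ab by (auto simp: m_def)
  have contu: "\<And>x y. a \<le> x \<Longrightarrow> y \<le> b \<Longrightarrow> continuous_on {x..y} (\<lambda>x. r1 x - r2 x)"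
    by (rule continuous_on_subset[OF cont_u]) (use ab in auto)
  show False
  proof (cases "r1 m > r2 m")
    case True
    have "r1 z > r2 z" if z: "a < z" "z < b" for z
    proof (rule ccontr)
      assume nz: "\<not> r1 z > r2 z"
      then have lt: "r1 z - r2 z < 0" using ne[OF z] by auto
      show False
      proof (cases "z \<le> m")
        case True
        have "\<exists>y. z \<le> y \<and> y \<le> m \<and> r1 y - r2 y = 0"
            by (rule IVT'[of "\<lambda>x. r1 x - r2 x" z 0 m]) (use lt \<open>r1 m > r2 m\<close> True z m contu[of z m] in auto)
          then obtain y where "z \<le> y" "y \<le> m" "r1 y - r2 y = 0" by blast
        then show False using ne[of y] z m by auto
      next
        case False
        have "\<exists>y. m \<le> y \<and> y \<le> z \<and> r1 y - r2 y = 0"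
            by (rule IVT2'[of "\<lambda>x. r1 x - r2 x" z 0 m]) (use lt \<open>r1 m > r2 m\<close> False z m contu[of m z] in auto)
          then obtain y where "m \<le> y" "y \<le> z" "r1 y - r2 y = 0" by blast
        then show False using ne[of y] z m by auto
      qed
    qed
    then show False using A_pos[OF ab za zb] by blast
  next
    case False
    then have mlt: "r1 m < r2 m" using ne[OF m] by auto
    have gt2: "r2 z > r1 z" if z: "a < z" "z < b" for z
    proof (rule ccontr)
      assume nz: "\<not> r2 z > r1 z"
      then have lt: "r1 z - r2 z > 0" using ne[OF z] by auto
      show False
      proof (cases "z \<le> m")
        case True
        have "\<exists>y. z \<le> y \<and> y \<le> m \<and> r1 y - r2 y = 0"
            by (rule IVT2'[of "\<lambda>x. r1 x - r2 x" m 0 z]) (use lt mlt True z m contu[of z m] in auto)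
          then obtain y where "z \<le> y" "y \<le> m" "r1 y - r2 y = 0" by blast
        then show False using ne[of y] z m by auto
      next
        case False
        have "\<exists>y. m \<le> y \<and> y \<le> z \<and> r1 y - r2 y = 0"
            by (rule IVT'[of "\<lambda>x. r1 x - r2 x" m 0 z]) (use lt mlt False z m contu[of m z] in auto)
          then obtain y where "m \<le> y" "y \<le> z" "r1 y - r2 y = 0" by blast
        then show False using ne[of y] z m by auto
      qed
    qed
    show False by (rule sw.A_pos[OF ab]) (use za zb gt2 in auto)
  qed
qed


lemma A_zero:
  assumes ab: "\<alpha> \<le> a" "b \<le> \<beta>" and za: "r1 a = r2 a" and zb: "r1 b = r2 b"
    and x: "a \<le> x" "x \<le> b"
  shows "r1 x = r2 x"
proof (rule ccontr)
  assume nx: "r1 x \<noteq> r2 x"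
  define Z1 where "Z1 = {z \<in> {a..x}. r1 z - r2 z = 0}"
  define Z2 where "Z2 = {z \<in> {x..b}. r1 z - r2 z = 0}"
  have c1: "continuous_on {a..x} (\<lambda>x. r1 x - r2 x)"
    by (rule continuous_on_subset[OF cont_u]) (use ab x in auto)
  have c2: "continuous_on {x..b} (\<lambda>x. r1 x - r2 x)"
    by (rule continuous_on_subset[OF cont_u]) (use ab x in auto)
  have cl1: "closed Z1" unfolding Z1_def by (rule continuous_closed_preimage_constant[OF c1]) auto
  have cl2: "closed Z2" unfolding Z2_def by (rule continuous_closed_preimage_constant[OF c2]) auto
  have ne1: "a \<in> Z1" using za x by (auto simp: Z1_def)
  have ne2: "b \<in> Z2" using zb x by (auto simp: Z2_def)
  have bd1: "bdd_above Z1" unfolding Z1_def by (rule bdd_aboveI[of _ x]) auto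
  have bd2: "bdd_below Z2" unfolding Z2_def by (rule bdd_belowI[of _ x]) auto
  define a' where "a' = Sup Z1"
  define b' where "b' = Inf Z2"
  have a'Z: "a' \<in> Z1" unfolding a'_def using closed_contains_Sup[OF _ bd1 cl1] ne1 by blast
  have b'Z: "b' \<in> Z2" unfolding b'_def using closed_contains_Inf[OF _ bd2 cl2] ne2 by blast
  have a'x: "a' < x" using a'Z nx unfolding Z1_def by (cases "a' = x") auto
  have b'x: "x < b'" using b'Z nx unfolding Z2_def by (cases "b' = x") auto
  have ne: "r1 z \<noteq> r2 z" if z: "a' < z" "z < b'" for z
  proof
    assume e: "r1 z = r2 z"
    show False
    proof (cases "z \<le> x")
      case True
      then have "z \<in> Z1" using e z a'Z by (auto simp: Z1_def)
      then have "z \<le> a'" unfolding a'_def by (rule cSup_upper[OF _ bd1])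
      then show False using z by auto
    next
      case False
      then have "z \<in> Z2" using e z b'Z by (auto simp: Z2_def)
      then have "b' \<le> z" unfolding b'_def by (rule cInf_lower[OF _ bd2])
      then show False using z by auto
    qed
  qed
  show False
    by (rule A_sign[of a' b']) (use a'Z b'Z a'x b'x ab ne in \<open>auto simp: Z1_def Z2_def\<close>)
qed

lemma dzero_left:
  assumes ap: "\<alpha> \<le> a" "a < p" "p \<le> \<beta>" and z: "\<And>x. a \<le> x \<Longrightarrow> x \<le> p \<Longrightarrow> r1 x = r2 x"
  shows "r1' p = r2' p"
proof (rule ccontr)
  assume ne: "r1' p \<noteq> r2' p"
  have pI: "p \<in> {\<alpha>..\<beta>}" using ap by auto
  show False
  proof (cases "r1' p - r2' p > 0")
    case True
    then obtain d where d: "d > 0" "\<And>h. h > 0 \<Longrightarrow> h < d \<Longrightarrow> r1 (p - h) - r2 (p - h) < r1 p - r2 p"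
      using DERIV_pos_inc_left[OF du[OF pI]] by blast
    define h where "h = min (d/2) ((p-a)/2)"
    have "h > 0" "h < d" "a \<le> p - h" "p - h \<le> p" using d(1) ap by (auto simp: h_def min_def field_simps)
    then show False using d(2)[of h] z[of "p-h"] z[of p] ap by auto
  next
    case False
    then have "r1' p - r2' p < 0" using ne by auto
    then obtain d where d: "d > 0" "\<And>h. h > 0 \<Longrightarrow> h < d \<Longrightarrow> r1 (p - h) - r2 (p - h) > r1 p - r2 p"
      using DERIV_neg_dec_left[OF du[OF pI]] by blast
    define h where "h = min (d/2) ((p-a)/2)"
    have "h > 0" "h < d" "a \<le> p - h" "p - h \<le> p" using d(1) ap by (auto simp: h_def min_def field_simps)
    then show False using d(2)[of h] z[of "p-h"] z[of p] ap by auto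
  qed
qed

lemma dzero_right:
  assumes ap: "\<alpha> \<le> p" "p < b" "b \<le> \<beta>" and z: "\<And>x. p \<le> x \<Longrightarrow> x \<le> b \<Longrightarrow> r1 x = r2 x"
  shows "r1' p = r2' p"
proof (rule ccontr)
  assume ne: "r1' p \<noteq> r2' p"
  have pI: "p \<in> {\<alpha>..\<beta>}" using ap by auto
  show False
  proof (cases "r1' p - r2' p > 0")
    case True
    then obtain d where d: "d > 0" "\<And>h. h > 0 \<Longrightarrow> h < d \<Longrightarrow> r1 p - r2 p < r1 (p + h) - r2 (p + h)"
      using DERIV_pos_inc_right[OF du[OF pI]] by blast
    define h where "h = min (d/2) ((b-p)/2)"
    have "h > 0" "h < d" "p + h \<le> b" "p \<le> p + h" using d(1) ap by (auto simp: h_def min_def field_simps)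
    then show False using d(2)[of h] z[of "p+h"] z[of p] ap by auto
  next
    case False
    then have "r1' p - r2' p < 0" using ne by auto
    then obtain d where d: "d > 0" "\<And>h. h > 0 \<Longrightarrow> h < d \<Longrightarrow> r1 p - r2 p > r1 (p + h) - r2 (p + h)"
      using DERIV_neg_dec_right[OF du[OF pI]] by blast
    define h where "h = min (d/2) ((b-p)/2)"
    have "h > 0" "h < d" "p + h \<le> b" "p \<le> p + h" using d(1) ap by (auto simp: h_def min_def field_simps)
    then show False using d(2)[of h] z[of "p+h"] z[of p] ap by auto
  qed
qed


lemma G:
  assumes p: "\<alpha> < p" "p < \<beta>" and z0: "r1 p = r2 p" and z1: "r1' p = r2' p"
  shows "\<exists>h>0. \<forall>x. p - h \<le> x \<and> x \<le> p + h \<longrightarrow> r1 x = r2 x"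
proof -
  define K where "K = 2 / c^3"
  have K0: "K \<ge> 0" using c by (simp add: K_def)
  have B0: "B \<ge> 0" by (rule B_nonneg)
  define h where "h = min (min (p-\<alpha>) (\<beta>-p)) (min 1 (1 / (2*(K+B+1))))"
  have h0: "h > 0" using p K0 B0 by (auto simp: h_def)
  have h1: "h \<le> 1" "h \<le> 1/(2*(K+B+1))" "p - h \<ge> \<alpha>" "p + h \<le> \<beta>" by (auto simp: h_def)
  have hK: "h * (K*h + B) < 1"
  proof -
    have "h * (K*h + B) \<le> h * (K + B)"
      using h0 h1 K0 by (intro mult_left_mono add_right_mono) (auto simp: mult_left_le)
    also have "\<dots> \<le> 1/(2*(K+B+1)) * (K+B)"
      using h1 K0 B0 by (intro mult_right_mono) auto
    also have "\<dots> < 1" using K0 B0 by (simp add: field_simps)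
    finally show ?thesis .
  qed
  define S where "S = {p-h..p+h}"
  have SI: "S \<subseteq> {\<alpha>..\<beta>}" using h1 by (auto simp: S_def)
  have pS: "p \<in> S" using h0 by (auto simp: S_def)
  have cu: "continuous_on S (\<lambda>x. \<bar>r1 x - r2 x\<bar>)"
    by (intro continuous_on_rabs continuous_on_subset[OF cont_u SI])
  have cp: "continuous_on S (\<lambda>x. \<bar>r1' x - r2' x + \<Delta> (r1 x) - \<Delta> (r2 x)\<bar>)"
    by (intro continuous_on_rabs continuous_on_subset[OF cont_phi SI])
  obtain x0 where x0: "x0 \<in> S" "\<And>y. y \<in> S \<Longrightarrow> \<bar>r1 y - r2 y\<bar> \<le> \<bar>r1 x0 - r2 x0\<bar>"
    using continuous_attains_sup[OF _ _ cu] pS by (auto simp: S_def)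
  obtain x1 where x1: "x1 \<in> S" "\<And>y. y \<in> S \<Longrightarrow> \<bar>r1' y - r2' y + \<Delta> (r1 y) - \<Delta> (r2 y)\<bar>
      \<le> \<bar>r1' x1 - r2' x1 + \<Delta> (r1 x1) - \<Delta> (r2 x1)\<bar>"
    using continuous_attains_sup[OF _ _ cp] pS by (auto simp: S_def)
  define Mu where "Mu = \<bar>r1 x0 - r2 x0\<bar>"
  define Mp where "Mp = \<bar>r1' x1 - r2' x1 + \<Delta> (r1 x1) - \<Delta> (r2 x1)\<bar>"
  have Mu0: "Mu \<ge> 0" by (simp add: Mu_def)
  have seg: "z \<in> S" if "y \<in> S" "min p y \<le> z" "z \<le> max p y" for y z
    using that pS by (auto simp: S_def)
  have bphi: "\<bar>r1' y - r2' y + \<Delta> (r1 y) - \<Delta> (r2 y)\<bar> \<le> K * Mu * h" if y: "y \<in> S" for y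
  proof -
    have "\<bar>(r1' y - r2' y + \<Delta> (r1 y) - \<Delta> (r2 y)) - (r1' p - r2' p + \<Delta> (r1 p) - \<Delta> (r2 p))\<bar>
       \<le> (K * Mu) * \<bar>y - p\<bar>"
    proof (rule MVT_abs)
      fix z assume "min p y \<le> z" "z \<le> max p y"
      then have zS: "z \<in> S" using seg y by blast
      then have zI: "z \<in> {\<alpha>..\<beta>}" using SI by auto
      show "((\<lambda>x. r1' x - r2' x + \<Delta> (r1 x) - \<Delta> (r2 x)) has_real_derivative
        (1 / (r2 z)^2 - 1 / (r1 z)^2)) (at z)" by (rule dphi[OF zI])
      have "\<bar>1 / (r2 z)^2 - 1 / (r1 z)^2\<bar> \<le> K * \<bar>r1 z - r2 z\<bar>"
        unfolding K_def by (rule lip_inv[OF c pos1[OF zI] pos2[OF zI]])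
      also have "\<dots> \<le> K * Mu" unfolding Mu_def using x0(2)[OF zS] K0 by (intro mult_left_mono) auto
      finally show "\<bar>1 / (r2 z)^2 - 1 / (r1 z)^2\<bar> \<le> K * Mu" .
    qed
    also have "\<dots> \<le> (K * Mu) * h" using y K0 Mu0 by (intro mult_left_mono) (auto simp: S_def)
    finally show ?thesis using z0 z1 by simp
  qed
  have Mp: "Mp \<le> K * Mu * h" unfolding Mp_def by (rule bphi[OF x1(1)])
  have bu: "\<bar>r1 y - r2 y\<bar> \<le> (Mp + B * Mu) * h" if y: "y \<in> S" for y
  proof -
    have "\<bar>(r1 y - r2 y) - (r1 p - r2 p)\<bar> \<le> (Mp + B * Mu) * \<bar>y - p\<bar>"
    proof (rule MVT_abs)
      fix z assume "min p y \<le> z" "z \<le> max p y"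
      then have zS: "z \<in> S" using seg y by blast
      then have zI: "z \<in> {\<alpha>..\<beta>}" using SI by auto
      show "((\<lambda>x. r1 x - r2 x) has_real_derivative (r1' z - r2' z)) (at z)" by (rule du[OF zI])
      have "\<bar>r1' z - r2' z\<bar> \<le> \<bar>r1' z - r2' z + \<Delta> (r1 z) - \<Delta> (r2 z)\<bar> + \<bar>\<Delta> (r1 z) - \<Delta> (r2 z)\<bar>"
        by linarith
      also have "\<dots> \<le> Mp + B * \<bar>r1 z - r2 z\<bar>"
        using x1(2)[OF zS] lip_Delta[OF pos1[OF zI] pos2[OF zI]] unfolding Mp_def by linarith
      also have "\<dots> \<le> Mp + B * Mu"
        unfolding Mu_def using x0(2)[OF zS] B0 by (intro add_left_mono mult_left_mono) auto
      finally show "\<bar>r1' z - r2' z\<bar> \<le> Mp + B * Mu" .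
    qed
    moreover have "0 \<le> Mp + B * Mu" using B0 Mu0 by (simp add: Mp_def)
    ultimately have "\<bar>r1 y - r2 y\<bar> \<le> (Mp + B * Mu) * \<bar>y - p\<bar>" using z0 by simp
    also have "\<dots> \<le> (Mp + B * Mu) * h" using y \<open>0 \<le> Mp + B * Mu\<close>
      by (intro mult_left_mono) (auto simp: S_def)
    finally show ?thesis .
  qed
  have "Mu \<le> (Mp + B * Mu) * h" using bu[OF x0(1)] by (simp add: Mu_def)
  also have "\<dots> \<le> (K * Mu * h + B * Mu) * h" using Mp h0 by (intro mult_right_mono) auto
  also have "\<dots> = Mu * (h * (K*h + B))" by (simp add: algebra_simps)
  finally have "Mu \<le> Mu * (h * (K*h + B))" .
  note MuLe = this
  have "\<not> Mu > 0"
  proof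
    assume "Mu > 0"
    then have "Mu * (h * (K*h + B)) < Mu * 1" by (intro mult_strict_left_mono hK)
    then show False using MuLe by linarith
  qed
  then have Mu00: "Mu = 0" using Mu0 by linarith
  have "\<forall>y\<in>S. r1 y = r2 y"
  proof
    fix y assume "y \<in> S"
    then have "\<bar>r1 y - r2 y\<bar> \<le> Mu" using x0(2) by (simp add: Mu_def)
    then show "r1 y = r2 y" using Mu00 by simp
  qed
  then show ?thesis using h0 by (auto simp: S_def)
qed

end



theorem lemma3p1:
  fixes \<delta> :: "real \<Rightarrow> real" and r1 r2 :: "real \<Rightarrow> real" and I1 I2 :: "real set"
    and tstar t :: real
  assumes nonneg: "\<forall>x>0. \<delta> x \<ge> 0"
    and bounded: "\<exists>B. \<forall>x>0. \<bar>\<delta> x\<bar> \<le> B"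
    and C1: "\<exists>\<delta>'. continuous_on {0<..} \<delta>' \<and> (\<forall>x>0. (\<delta> has_real_derivative \<delta>' x) (at x))"
    and sol1: "is_solution \<delta> I1 r1"
    and sol2: "is_solution \<delta> I2 r2"
    and distinct: "\<exists>s\<in>I1 \<inter> I2. r1 s \<noteq> r2 s"
    and tstar: "tstar \<in> I1 \<inter> I2" "r1 tstar = r2 tstar"
    and t: "t \<in> I1 \<inter> I2" "t \<noteq> tstar"
  shows "r1 t \<noteq> r2 t"
proof
  assume eqt: "r1 t = r2 t"
  obtain B where B: "\<And>x. x > 0 \<Longrightarrow> \<bar>\<delta> x\<bar> \<le> B" using bounded by blast
  obtain \<delta>' where d': "\<And>x. x > 0 \<Longrightarrow> (\<delta> has_real_derivative \<delta>' x) (at x)" using C1 by blast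
  have contd: "continuous_on {0<..} \<delta>"
    by (intro continuous_at_imp_continuous_on ballI DERIV_isCont[OF d']) auto
  obtain r1' where i1: "is_interval I1" and p1: "\<And>t. t \<in> I1 \<Longrightarrow> r1 t > 0"
    and r1': "\<And>t. t \<in> I1 \<Longrightarrow> (r1 has_real_derivative r1' t) (at t) \<and>
               (r1' has_real_derivative (- 1 / (r1 t)^2 - \<delta> (r1 t) * r1' t)) (at t)"
    using sol1 unfolding is_solution_def by blast
  obtain r2' where i2: "is_interval I2" and p2: "\<And>t. t \<in> I2 \<Longrightarrow> r2 t > 0"
    and r2': "\<And>t. t \<in> I2 \<Longrightarrow> (r2 has_real_derivative r2' t) (at t) \<and>
               (r2' has_real_derivative (- 1 / (r2 t)^2 - \<delta> (r2 t) * r2' t)) (at t)"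
    using sol2 unfolding is_solution_def by blast
  obtain s where s: "s \<in> I1 \<inter> I2" "r1 s \<noteq> r2 s" using distinct by blast
  define t1 where "t1 = min tstar t"
  define t2 where "t2 = max tstar t"
  have t12: "t1 < t2" using t(2) by (auto simp: t1_def t2_def)
  have zt1: "r1 t1 = r2 t1" and zt2: "r1 t2 = r2 t2" using eqt tstar(2) by (auto simp: t1_def t2_def min_def max_def)
  have t1I: "t1 \<in> I1 \<inter> I2" and t2I: "t2 \<in> I1 \<inter> I2" using t tstar by (auto simp: t1_def t2_def min_def max_def)
  define \<alpha> where "\<alpha> = min s t1"
  define \<beta> where "\<beta> = max s t2"
  have \<alpha>I: "\<alpha> \<in> I1 \<inter> I2" and \<beta>I: "\<beta> \<in> I1 \<inter> I2" using s t1I t2I by (auto simp: \<alpha>_def \<beta>_def min_def max_def)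
  have J1: "{\<alpha>..\<beta>} \<subseteq> I1" using i1 \<alpha>I \<beta>I unfolding is_interval_1 by auto
  have J2: "{\<alpha>..\<beta>} \<subseteq> I2" using i2 \<alpha>I \<beta>I unfolding is_interval_1 by auto
  have \<alpha>\<beta>: "\<alpha> \<le> \<beta>" using t12 by (auto simp: \<alpha>_def \<beta>_def)
  have cm: "continuous_on {\<alpha>..\<beta>} (\<lambda>x. min (r1 x) (r2 x))"
  proof (intro continuous_on_min)
    show "continuous_on {\<alpha>..\<beta>} r1"
      proof (intro continuous_at_imp_continuous_on ballI)
        fix x assume "x \<in> {\<alpha>..\<beta>}"
        then have "x \<in> I1" using J1 by blast
        then show "isCont r1 x" using r1' DERIV_isCont by blast
      qed
    show "continuous_on {\<alpha>..\<beta>} r2"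
      proof (intro continuous_at_imp_continuous_on ballI)
        fix x assume "x \<in> {\<alpha>..\<beta>}"
        then have "x \<in> I2" using J2 by blast
        then show "isCont r2 x" using r2' DERIV_isCont by blast
      qed
  qed
  obtain xm where xm: "xm \<in> {\<alpha>..\<beta>}" "\<And>y. y \<in> {\<alpha>..\<beta>} \<Longrightarrow> min (r1 xm) (r2 xm) \<le> min (r1 y) (r2 y)"
    using continuous_attains_inf[OF _ _ cm] \<alpha>\<beta> by auto
  define c where "c = min (r1 xm) (r2 xm) / 2"
  have c: "c > 0" using p1 p2 xm(1) J1 J2 by (auto simp: c_def)
  obtain \<Delta> where \<Delta>: "\<And>x. x > c \<Longrightarrow> (\<Delta> has_real_derivative \<delta> x) (at x)"
    using antideriv[OF contd c] by blast
  interpret two_sol \<delta> B c \<Delta> \<alpha> \<beta> r1 r2 r1' r2'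
  proof
    fix x assume x: "x \<in> {\<alpha>..\<beta>}"
    have "min (r1 xm) (r2 xm) \<le> min (r1 x) (r2 x)" by (rule xm(2)[OF x])
    then show "r1 x > c" "r2 x > c" using c by (auto simp: c_def)
    show "(r1 has_real_derivative r1' x) (at x)"
      "(r1' has_real_derivative (- 1 / (r1 x)^2 - \<delta> (r1 x) * r1' x)) (at x)"
      using r1' x J1 by auto
    show "(r2 has_real_derivative r2' x) (at x)"
      "(r2' has_real_derivative (- 1 / (r2 x)^2 - \<delta> (r2 x) * r2' x)) (at x)"
      using r2' x J2 by auto
  qed (use B c \<Delta> in auto)
  have sout: "s < t1 \<or> s > t2"
  proof (rule ccontr)
    assume "\<not> ?thesis"
    then have "t1 \<le> s" "s \<le> t2" by auto
    then have "r1 s = r2 s" using A_zero[of t1 t2 s] zt1 zt2 by (auto simp: \<alpha>_def \<beta>_def)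
    then show False using s by auto
  qed
  then show False
  proof
    assume st: "s > t2"
    have ab: "\<alpha> = t1" "\<beta> = s" using st t12 by (auto simp: \<alpha>_def \<beta>_def)
    define Z where "Z = {z \<in> {t2..s}. r1 z - r2 z = 0}"
    have cZ: "continuous_on {t2..s} (\<lambda>x. r1 x - r2 x)"
      by (rule continuous_on_subset[OF cont_u]) (use ab t12 in auto)
    have clZ: "closed Z" unfolding Z_def by (rule continuous_closed_preimage_constant[OF cZ]) auto
    have bdZ: "bdd_above Z" unfolding Z_def by (rule bdd_aboveI[of _ s]) auto
    have neZ: "t2 \<in> Z" using zt2 st by (auto simp: Z_def)
    define p where "p = Sup Z"
    have pZ: "p \<in> Z" unfolding p_def using closed_contains_Sup[OF _ bdZ clZ] neZ by blast
    have ps: "p < s" using pZ s(2) unfolding Z_def by (cases "p = s") auto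
    have pt2: "t2 \<le> p" using pZ by (auto simp: Z_def)
    have zp: "r1 x = r2 x" if "t1 \<le> x" "x \<le> p" for x
      using A_zero[of t1 p x] that zt1 pZ ab ps by (auto simp: Z_def)
    have dp: "r1' p = r2' p" by (rule dzero_left[of t1]) (use ab t12 pt2 ps zp in auto)
    have "\<exists>h>0. \<forall>x. p - h \<le> x \<and> x \<le> p + h \<longrightarrow> r1 x = r2 x"
      by (rule G) (use ab t12 pt2 ps pZ dp in \<open>auto simp: Z_def\<close>)
    then obtain h where h: "h > 0" "\<And>x. p - h \<le> x \<Longrightarrow> x \<le> p + h \<Longrightarrow> r1 x = r2 x"
      by blast
    define q where "q = p + min h ((s - p)/2)"
    have q: "p < q" "q \<le> s" "q \<le> p + h" using h(1) ps by (auto simp: q_def min_def field_simps)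
    have "q \<in> Z" using q pt2 h(2)[of q] by (auto simp: Z_def)
    then have "q \<le> p" unfolding p_def by (rule cSup_upper[OF _ bdZ])
    then show False using q by auto
  next
    assume st: "s < t1"
    have ab: "\<alpha> = s" "\<beta> = t2" using st t12 by (auto simp: \<alpha>_def \<beta>_def)
    define Z where "Z = {z \<in> {s..t1}. r1 z - r2 z = 0}"
    have cZ: "continuous_on {s..t1} (\<lambda>x. r1 x - r2 x)"
      by (rule continuous_on_subset[OF cont_u]) (use ab t12 in auto)
    have clZ: "closed Z" unfolding Z_def by (rule continuous_closed_preimage_constant[OF cZ]) auto
    have bdZ: "bdd_below Z" unfolding Z_def by (rule bdd_belowI[of _ s]) auto
    have neZ: "t1 \<in> Z" using zt1 st by (auto simp: Z_def)
    define p where "p = Inf Z"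
    have pZ: "p \<in> Z" unfolding p_def using closed_contains_Inf[OF _ bdZ clZ] neZ by blast
    have ps: "s < p" using pZ s(2) unfolding Z_def by (cases "p = s") auto
    have pt1: "p \<le> t1" using pZ by (auto simp: Z_def)
    have zp: "r1 x = r2 x" if "p \<le> x" "x \<le> t2" for x
      using A_zero[of p t2 x] that zt2 pZ ab ps by (auto simp: Z_def)
    have dp: "r1' p = r2' p" by (rule dzero_right[of p t2]) (use ab t12 pt1 ps zp in auto)
    have "\<exists>h>0. \<forall>x. p - h \<le> x \<and> x \<le> p + h \<longrightarrow> r1 x = r2 x"
      by (rule G) (use ab t12 pt1 ps pZ dp in \<open>auto simp: Z_def\<close>)
    then obtain h where h: "h > 0" "\<And>x. p - h \<le> x \<Longrightarrow> x \<le> p + h \<Longrightarrow> r1 x = r2 x"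
      by blast
    define q where "q = p - min h ((p - s)/2)"
    have q: "q < p" "s \<le> q" "p - h \<le> q" using h(1) ps by (auto simp: q_def min_def field_simps)
    have "q \<in> Z" using q pt1 h(2)[of q] by (auto simp: Z_def)
    then have "p \<le> q" unfolding p_def by (rule cInf_lower[OF _ bdZ])
    then show False using q by auto
  qed
qed

end
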